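(* Let $H:[0,1]\times\mathbb R\to\mathbb R$ be continuous, coercive in $p$, and quasiconvex in $p$ with $\mathrm{Int}\{p: H(s,p)\le b\}=\{p:H(s,p)<b\}$ for all $s,b$. Let $a_H=\max_{s}\min_{p}H(s,p)$, let $a\ge a_H$, and if $a=a_H$ assume that $s\mapsto\min_pH(s,p)$ is constant on $[0,1]$. Let $\sigma^+_a(s)=\max\{p:H(s,p)=a\}$. Let $w$ be continuous on $[0,1]$ and a viscosity solution of $H(s,w'(s))=a$ in $(0,1)$. Then the following are equivalent: (1) $H(1,\varphi'(1))\ge a$ for every $\varphi\in C^1([0,1])$ that is a constrained subtangent to $w$ at $1$, i.e. $\varphi(1)=w(1)$ and $w\ge\varphi$ on $(1-\delta,1)$ for some $\delta>0$; (2) $w(s)=w(0)+\int_0^s\sigma^+_a(t)\,dt$ for all $s\in[0,1]$ (i.e. $w$ is the maximal subsolution of $H(s,u')=a$ in $(0,1)$ taking the value $w(0)$ at $0$).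
   Context: Coercive in $p$ means $H(s,p)\to+\infty$ as $|p|\to\infty$ uniformly in $s$; quasiconvex means convex sublevel sets in $p$. Sub/solutions are in the viscosity sense. *)

theory Defs
  imports "HOL-Analysis.Analysis"
begin

definition C1_open :: "(real \<Rightarrow> real) \<Rightarrow> (real \<Rightarrow> real) \<Rightarrow> bool" where
  "C1_open phi dphi \<longleftrightarrow>
     (\<forall>x\<in>{0<..<1}. (phi has_real_derivative dphi x) (at x)) \<and> continuous_on {0<..<1} dphi"

definition C1_closed :: "(real \<Rightarrow> real) \<Rightarrow> (real \<Rightarrow> real) \<Rightarrow> bool" where
  "C1_closed phi dphi \<longleftrightarrow>
     (\<forall>x\<in>{0..1}. (phi has_real_derivative dphi x) (at x within {0..1})) \<and> continuous_on {0..1} dphi"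

definition visc_sub :: "(real \<Rightarrow> real \<Rightarrow> real) \<Rightarrow> real \<Rightarrow> (real \<Rightarrow> real) \<Rightarrow> bool" where
  "visc_sub H a w \<longleftrightarrow>
     (\<forall>x\<in>{0<..<1}. \<forall>phi dphi. C1_open phi dphi \<and>
        (\<exists>e>0. \<forall>y\<in>{0<..<1}. \<bar>y - x\<bar> < e \<longrightarrow> w y - phi y \<le> w x - phi x)
        \<longrightarrow> H x (dphi x) \<le> a)"

definition visc_super :: "(real \<Rightarrow> real \<Rightarrow> real) \<Rightarrow> real \<Rightarrow> (real \<Rightarrow> real) \<Rightarrow> bool" where
  "visc_super H a w \<longleftrightarrow>
     (\<forall>x\<in>{0<..<1}. \<forall>phi dphi. C1_open phi dphi \<and>
        (\<exists>e>0. \<forall>y\<in>{0<..<1}. \<bar>y - x\<bar> < e \<longrightarrow> w y - phi y \<ge> w x - phi x)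
        \<longrightarrow> H x (dphi x) \<ge> a)"

definition visc_sol :: "(real \<Rightarrow> real \<Rightarrow> real) \<Rightarrow> real \<Rightarrow> (real \<Rightarrow> real) \<Rightarrow> bool" where
  "visc_sol H a w \<longleftrightarrow> visc_sub H a w \<and> visc_super H a w"

definition minH :: "(real \<Rightarrow> real \<Rightarrow> real) \<Rightarrow> real \<Rightarrow> real" where
  "minH H s = Inf (range (H s))"

definition aH :: "(real \<Rightarrow> real \<Rightarrow> real) \<Rightarrow> real" where
  "aH H = Sup (minH H ` {0..1})"

definition sigma_plus :: "(real \<Rightarrow> real \<Rightarrow> real) \<Rightarrow> real \<Rightarrow> real \<Rightarrow> real" where
  "sigma_plus H a s = Sup {p. H s p = a}"

end

theory Submission
  imports Defs
begin


lemma pw: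
  fixes f :: "real \<Rightarrow> real"
  assumes fc: "continuous_on UNIV f"
    and co: "\<forall>M. \<exists>R. \<forall>p. \<bar>p\<bar> \<ge> R \<longrightarrow> f p \<ge> M"
    and cv: "\<forall>b. convex {p. f p \<le> b}"
    and it: "\<forall>b. interior {p. f p \<le> b} = {p. f p < b}"
    and le: "Inf (range f) \<le> a"
  shows "f (Sup {p. f p = a}) = a" "\<forall>p. f p \<le> a \<longrightarrow> p \<le> Sup {p. f p = a}"
    "f (Inf {p. f p = a}) = a" "\<forall>p. f p \<le> a \<longrightarrow> Inf {p. f p = a} \<le> p"
    "Inf (range f) < a \<Longrightarrow> Inf {p. f p = a} < Sup {p. f p = a} \<and>
        (\<forall>p. Inf {p. f p = a} < p \<and> p < Sup {p. f p = a} \<longrightarrow> f p < a)"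
    "Inf (range f) = a \<Longrightarrow> Inf {p. f p = a} = Sup {p. f p = a} \<and>
        (\<forall>p. p \<noteq> Sup {p. f p = a} \<longrightarrow> f p > a)"
proof -
  define E where "E = {p. f p = a}"
  obtain R0 where R0: "\<forall>p. \<bar>p\<bar> \<ge> R0 \<longrightarrow> f p \<ge> f 0" using co by blast
  obtain pm where pm: "pm \<in> {-\<bar>R0\<bar>..\<bar>R0\<bar>}" "\<forall>y\<in>{-\<bar>R0\<bar>..\<bar>R0\<bar>}. f pm \<le> f y"
    using continuous_attains_inf[of "{-\<bar>R0\<bar>..\<bar>R0\<bar>}" f] fc continuous_on_subset by force
  have pmin: "\<forall>p. f pm \<le> f p"
  proof
    fix p show "f pm \<le> f p"
    proof (cases "\<bar>p\<bar> \<ge> R0")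
      case True
      then have "f p \<ge> f 0" using R0 by blast
      moreover have "f pm \<le> f 0" using pm by auto
      ultimately show ?thesis by linarith
    next
      case False
      then have "p \<in> {-\<bar>R0\<bar>..\<bar>R0\<bar>}" by auto
      then show ?thesis using pm(2) by blast
    qed
  qed
  have infr: "Inf (range f) = f pm"
    by (rule cInf_eq_minimum) (use pmin in auto)
  have fpm: "f pm \<le> a" using le infr by simp
  obtain R where R: "\<forall>p. \<bar>p\<bar> \<ge> R \<longrightarrow> f p \<ge> a + 1" using co by blast
  have Eb: "\<forall>p\<in>E. \<bar>p\<bar> < R"
  proof
    fix p assume "p \<in> E"
    then have "f p = a" unfolding E_def by simp
    then show "\<bar>p\<bar> < R" using R[rule_format, of p] by linarith
  qed
  have ivt_up: "\<exists>x\<ge>p. f x = a" if fp: "f p \<le> a" for p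
  proof -
    define q where "q = \<bar>p\<bar> + \<bar>R\<bar> + 1"
    have "f q \<ge> a + 1" using R unfolding q_def by auto
    moreover have "continuous_on {p..q} f" using fc continuous_on_subset by blast
    moreover have "p \<le> q" unfolding q_def by linarith
    ultimately obtain x where "p \<le> x" "x \<le> q" "f x = a"
      using IVT'[of f p a q] fp by force
    then show ?thesis by blast
  qed
  have ivt_down: "\<exists>x\<le>p. f x = a" if fp: "f p \<le> a" for p
  proof -
    define q where "q = - (\<bar>p\<bar> + \<bar>R\<bar> + 1)"
    have "f q \<ge> a + 1" using R unfolding q_def by auto
    moreover have "continuous_on {q..p} f" using fc continuous_on_subset by blast
    moreover have "q \<le> p" unfolding q_def by linarith
    ultimately obtain x where "q \<le> x" "x \<le> p" "f x = a"
      using IVT2'[of f p a q] fp by force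
    then show ?thesis by blast
  qed
  have Ene: "E \<noteq> {}" using ivt_up[OF fpm] unfolding E_def by auto
  have Ecl: "closed E" unfolding E_def
    using continuous_closed_preimage_constant[of UNIV f a] fc by (simp add: vimage_def)
  have Eba: "bdd_above E" using Eb by (metis abs_less_iff bdd_above.I less_imp_le)
  have Ebb: "bdd_below E" using Eb by (metis abs_less_iff bdd_below.I less_imp_le neg_less_iff_less
        minus_less_iff)
  have SE: "Sup E \<in> E" using closed_contains_Sup[OF Ene Eba Ecl] .
  have IE: "Inf E \<in> E" using closed_contains_Inf[OF Ene Ebb Ecl] .
  show "f (Sup {p. f p = a}) = a" using SE unfolding E_def by simp
  show "f (Inf {p. f p = a}) = a" using IE unfolding E_def by simp
  have upS: "\<forall>p. f p \<le> a \<longrightarrow> p \<le> Sup E"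
  proof (intro allI impI)
    fix p assume "f p \<le> a"
    then obtain x where "x \<ge> p" "f x = a" using ivt_up by blast
    then have "x \<le> Sup E" using cSup_upper[OF _ Eba] unfolding E_def by auto
    then show "p \<le> Sup E" using \<open>x \<ge> p\<close> by linarith
  qed
  have loI: "\<forall>p. f p \<le> a \<longrightarrow> Inf E \<le> p"
  proof (intro allI impI)
    fix p assume "f p \<le> a"
    then obtain x where "x \<le> p" "f x = a" using ivt_down by blast
    then have "Inf E \<le> x" using cInf_lower[OF _ Ebb] unfolding E_def by auto
    then show "Inf E \<le> p" using \<open>x \<le> p\<close> by linarith
  qed
  show "\<forall>p. f p \<le> a \<longrightarrow> p \<le> Sup {p. f p = a}" using upS unfolding E_def .
  show "\<forall>p. f p \<le> a \<longrightarrow> Inf {p. f p = a} \<le> p" using loI unfolding E_def .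
  have seg: "{Inf E..Sup E} \<subseteq> {p. f p \<le> a}"
  proof
    fix x assume x: "x \<in> {Inf E..Sup E}"
    have c: "convex {p. f p \<le> a}" using cv by blast
    have "Inf E \<in> {p. f p \<le> a}" "Sup E \<in> {p. f p \<le> a}" using SE IE unfolding E_def by auto
    then have "closed_segment (Inf E) (Sup E) \<subseteq> {p. f p \<le> a}"
      using c by (simp add: closed_segment_subset)
    moreover have "x \<in> closed_segment (Inf E) (Sup E)"
      using x by (simp add: closed_segment_eq_real_ivl)
    ultimately show "x \<in> {p. f p \<le> a}" by blast
  qed
  have intseg: "{Inf E<..<Sup E} \<subseteq> {p. f p < a}"
  proof -
    have "interior {Inf E..Sup E} \<subseteq> interior {p. f p \<le> a}" by (rule interior_mono[OF seg])
    then show ?thesis using it by simp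
  qed
  show "Inf (range f) < a \<Longrightarrow> Inf {p. f p = a} < Sup {p. f p = a} \<and>
        (\<forall>p. Inf {p. f p = a} < p \<and> p < Sup {p. f p = a} \<longrightarrow> f p < a)"
  proof -
    assume "Inf (range f) < a"
    then have "f pm < a" using infr by simp
    then have "Inf E \<le> pm" "pm \<le> Sup E" "pm \<notin> E" using upS loI unfolding E_def by auto
    then have "Inf E < Sup E"
    proof -
      assume a1: "Inf E \<le> pm" "pm \<le> Sup E" "pm \<notin> E"
      show ?thesis
      proof (rule ccontr)
        assume "\<not> Inf E < Sup E"
        then have "pm = Inf E" using a1 by linarith
        then show False using a1 IE by simp
      qed
    qed
    then show ?thesis using intseg unfolding E_def by auto
  qed
  show "Inf (range f) = a \<Longrightarrow> Inf {p. f p = a} = Sup {p. f p = a} \<and>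
        (\<forall>p. p \<noteq> Sup {p. f p = a} \<longrightarrow> f p > a)"
  proof -
    assume "Inf (range f) = a"
    then have ge: "\<forall>p. f p \<ge> a" using pmin infr by simp
    have "{p. f p < a} = {}" using ge by (auto simp: not_less)
    have eq: "Inf E = Sup E"
    proof (rule ccontr)
      assume "Inf E \<noteq> Sup E"
      then have "Inf E < Sup E" using cInf_le_cSup[OF Ene Eba Ebb] by simp
      then have "(Inf E + Sup E)/2 \<in> {Inf E<..<Sup E}" by auto
      then have "(Inf E + Sup E)/2 \<in> {p. f p < a}" using intseg by blast
      then show False using ge[rule_format, of "(Inf E + Sup E)/2"] by simp
    qed
    have "\<forall>p. p \<noteq> Sup E \<longrightarrow> f p > a"
    proof (intro allI impI)
      fix p assume "p \<noteq> Sup E"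
      show "f p > a"
      proof (rule ccontr)
        assume "\<not> f p > a"
        then have "f p \<le> a" by simp
        then have "Inf E \<le> p" "p \<le> Sup E" using upS loI by auto
        then show False using eq \<open>p \<noteq> Sup E\<close> by linarith
      qed
    qed
    then show ?thesis using eq unfolding E_def by auto
  qed
qed



definition good :: "(real \<Rightarrow> real \<Rightarrow> real) \<Rightarrow> bool" where
  "good H \<longleftrightarrow> continuous_on ({0..1} \<times> UNIV) (\<lambda>(s, p). H s p) \<and>
    (\<forall>M. \<exists>R. \<forall>s\<in>{0..1}. \<forall>p. \<bar>p\<bar> \<ge> R \<longrightarrow> H s p \<ge> M) \<and>
    (\<forall>s\<in>{0..1}. \<forall>b. convex {p. H s p \<le> b}) \<and>
    (\<forall>s\<in>{0..1}. \<forall>b. interior {p. H s p \<le> b} = {p. H s p < b})"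

lemma good_slice_cont:
  assumes "continuous_on ({0..1} \<times> UNIV) (\<lambda>(s, p). H s p)" "s \<in> {0..1}"
  shows "continuous_on UNIV (H s)"
proof -
  have "continuous_on UNIV (\<lambda>x. (\<lambda>(s, p). H s p) (s, x))"
    by (rule continuous_on_compose2[OF assms(1)]) (use assms(2) in \<open>auto intro!: continuous_intros\<close>)
  then show ?thesis by simp
qed

lemma good_slice:
  assumes "good H" "s \<in> {0..1}"
  shows "continuous_on UNIV (H s)" "\<forall>M. \<exists>R. \<forall>p. \<bar>p\<bar> \<ge> R \<longrightarrow> H s p \<ge> M"
    "\<forall>b. convex {p. H s p \<le> b}" "\<forall>b. interior {p. H s p \<le> b} = {p. H s p < b}"
proof -
  have g: "continuous_on ({0..1} \<times> UNIV) (\<lambda>(s, p). H s p)"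
    "\<forall>M. \<exists>R. \<forall>s\<in>{0..1}. \<forall>p. \<bar>p\<bar> \<ge> R \<longrightarrow> H s p \<ge> M"
    "\<forall>s\<in>{0..1}. \<forall>b. convex {p. H s p \<le> b}"
    "\<forall>s\<in>{0..1}. \<forall>b. interior {p. H s p \<le> b} = {p. H s p < b}"
    using assms(1) unfolding good_def by auto
  show "continuous_on UNIV (H s)" using good_slice_cont[OF g(1) assms(2)] .
  show "\<forall>M. \<exists>R. \<forall>p. \<bar>p\<bar> \<ge> R \<longrightarrow> H s p \<ge> M"
  proof
    fix M obtain R where "\<forall>s\<in>{0..1}. \<forall>p. \<bar>p\<bar> \<ge> R \<longrightarrow> H s p \<ge> M" using g(2) by blast
    then show "\<exists>R. \<forall>p. \<bar>p\<bar> \<ge> R \<longrightarrow> H s p \<ge> M" using assms(2) by blast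
  qed
  show "\<forall>b. convex {p. H s p \<le> b}" using g(3) assms(2) by blast
  show "\<forall>b. interior {p. H s p \<le> b} = {p. H s p < b}" using g(4) assms(2) by blast
qed

lemma neg_set: "{p. P (- p)} = uminus ` {p::real. P p}"
proof (rule set_eqI)
  fix x :: real
  show "x \<in> {p. P (- p)} \<longleftrightarrow> x \<in> uminus ` {p. P p}"
  proof
    assume "x \<in> {p. P (- p)}"
    then show "x \<in> uminus ` {p. P p}" by (intro image_eqI[of x uminus "- x"]) auto
  next
    assume "x \<in> uminus ` {p. P p}"
    then show "x \<in> {p. P (- p)}" by auto
  qed
qed

lemma good_neg:
  assumes "good H"
  shows "good (\<lambda>s p. H s (- p))"
proof -
  have c: "continuous_on ({0..1} \<times> UNIV) (\<lambda>(s, p). H s p)" using assms unfolding good_def by blast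
  have "continuous_on ({0..1} \<times> UNIV) (\<lambda>x. (\<lambda>(s, p). H s p) (fst x, - snd x))"
    by (rule continuous_on_compose2[OF c]) (auto intro!: continuous_intros)
  then have c': "continuous_on ({0..1} \<times> UNIV) (\<lambda>(s, p). H s (- p))"
    by (simp add: case_prod_beta)
  have co: "\<forall>M. \<exists>R. \<forall>s\<in>{0..1}. \<forall>p. \<bar>p\<bar> \<ge> R \<longrightarrow> H s (- p) \<ge> M"
    using assms unfolding good_def by (metis abs_minus_cancel)
  have cv: "\<forall>s\<in>{0..1}. \<forall>b. convex {p. H s (- p) \<le> b}"
    using assms unfolding good_def by (simp add: neg_set[of "\<lambda>p. H _ p \<le> _"] convex_negations)
  have it: "\<forall>s\<in>{0..1}. \<forall>b. interior {p. H s (- p) \<le> b} = {p. H s (- p) < b}"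
    using assms unfolding good_def
    by (simp add: neg_set[of "\<lambda>p. H _ p \<le> _"] neg_set[of "\<lambda>p. H _ p < _"] interior_negations)
  show ?thesis unfolding good_def using c' co cv it by blast
qed

lemma minH_neg: "minH (\<lambda>s p. H s (- p)) s = minH H s"
proof -
  have "range (\<lambda>p. H s (- p)) = range (H s)"
    by (auto simp: image_iff) (metis minus_minus)
  then show ?thesis unfolding minH_def by simp
qed

lemma sigma_neg: "sigma_plus (\<lambda>s p. H s (- p)) a s = - Inf {p. H s p = a}"
  unfolding sigma_plus_def Inf_real_def using neg_set[of "\<lambda>p. H s p = a"] by simp

lemma U_gen:
  fixes H :: "real \<Rightarrow> real \<Rightarrow> real" and a p s0 :: real
  assumes c: "continuous_on ({0..1} \<times> UNIV) (\<lambda>(s, p). H s p)"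
    and co: "\<forall>M. \<exists>R. \<forall>s\<in>{0..1}. \<forall>p. \<bar>p\<bar> \<ge> R \<longrightarrow> H s p \<ge> M"
    and s0: "s0 \<in> {0..1}"
    and hp: "\<forall>p'. p' \<ge> p \<longrightarrow> H s0 p' > a"
  shows "\<exists>r>0. \<forall>s\<in>{0..1}. \<bar>s - s0\<bar> < r \<longrightarrow> (\<forall>p'. p' \<ge> p \<longrightarrow> H s p' > a)"
proof -
  obtain R where R: "\<forall>s\<in>{0..1}. \<forall>p. \<bar>p\<bar> \<ge> R \<longrightarrow> H s p \<ge> a + 1" using co by blast
  define R' where "R' = \<bar>R\<bar> + \<bar>p\<bar> + 1"
  define C where "C = {p..R'}"
  have Cne: "C \<noteq> {}" unfolding C_def R'_def by auto
  have cs0: "continuous_on C (H s0)" using good_slice_cont[OF c s0] continuous_on_subset by blast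
  obtain p1 where p1: "p1 \<in> C" "\<forall>y\<in>C. H s0 p1 \<le> H s0 y"
    using continuous_attains_inf[OF _ Cne cs0] unfolding C_def by auto
  define \<eta> where "\<eta> = H s0 p1 - a"
  have eta: "\<eta> > 0" using hp p1 unfolding \<eta>_def C_def by auto
  define K where "K = {0..1::real} \<times> C"
  have "compact K" unfolding K_def C_def by (intro compact_Times) auto
  moreover have "continuous_on K (\<lambda>(s, p). H s p)"
    using c continuous_on_subset unfolding K_def by blast
  ultimately have "uniformly_continuous_on K (\<lambda>(s, p). H s p)"
    by (rule compact_uniformly_continuous[rotated])
  then obtain d where d: "d > 0" "\<forall>x\<in>K. \<forall>x'\<in>K. dist x' x < d \<longrightarrow>
      dist ((\<lambda>(s, p). H s p) x') ((\<lambda>(s, p). H s p) x) < \<eta>"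
    unfolding uniformly_continuous_on_def using eta by blast
  show ?thesis
  proof (intro exI[of _ d] conjI ballI impI allI)
    show "d > 0" by fact
    fix s p' assume s: "s \<in> {0..1}" "\<bar>s - s0\<bar> < d" and p': "p \<le> p'"
    show "H s p' > a"
    proof (cases "p' \<le> R'")
      case True
      then have in1: "(s, p') \<in> K" "(s0, p') \<in> K" using s s0 p' unfolding K_def C_def by auto
      have "dist (s, p') (s0, p') < d" using s by (simp add: dist_Pair_Pair dist_real_def)
      then have "dist ((\<lambda>(s, p). H s p) (s, p')) ((\<lambda>(s, p). H s p) (s0, p')) < \<eta>"
        using d(2) in1 by blast
      then have "dist (H s p') (H s0 p') < \<eta>" by simp
      moreover have "H s0 p1 \<le> H s0 p'" using p1(2) True p' unfolding C_def by auto
      ultimately show ?thesis unfolding \<eta>_def dist_real_def by linarith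
    next
      case False
      then have "\<bar>p'\<bar> \<ge> R" unfolding R'_def by linarith
      then have "H s p' \<ge> a + 1" using R s(1) by blast
      then show ?thesis by linarith
    qed
  qed
qed



context
  fixes H :: "real \<Rightarrow> real \<Rightarrow> real" and a :: real and s :: real
  assumes g: "good H" and s: "s \<in> {0..1}" and mle: "minH H s \<le> a"
begin

lemma pwH:
  shows "H s (sigma_plus H a s) = a" "\<And>p. H s p \<le> a \<Longrightarrow> p \<le> sigma_plus H a s"
    "H s (Inf {p. H s p = a}) = a" "\<And>p. H s p \<le> a \<Longrightarrow> Inf {p. H s p = a} \<le> p"
    "minH H s < a \<Longrightarrow> Inf {p. H s p = a} < sigma_plus H a s \<and>
        (\<forall>p. Inf {p. H s p = a} < p \<and> p < sigma_plus H a s \<longrightarrow> H s p < a)"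
    "minH H s = a \<Longrightarrow> Inf {p. H s p = a} = sigma_plus H a s \<and>
        (\<forall>p. p \<noteq> sigma_plus H a s \<longrightarrow> H s p > a)"
proof -
  note P = pw[OF good_slice(1)[OF g s] good_slice(2)[OF g s] good_slice(3)[OF g s]
      good_slice(4)[OF g s], of a, folded minH_def sigma_plus_def, OF mle]
  show "H s (sigma_plus H a s) = a" using P(1) .
  show "\<And>p. H s p \<le> a \<Longrightarrow> p \<le> sigma_plus H a s" using P(2) by blast
  show "H s (Inf {p. H s p = a}) = a" using P(3) .
  show "\<And>p. H s p \<le> a \<Longrightarrow> Inf {p. H s p = a} \<le> p" using P(4) by blast
  show "minH H s < a \<Longrightarrow> Inf {p. H s p = a} < sigma_plus H a s \<and>
        (\<forall>p. Inf {p. H s p = a} < p \<and> p < sigma_plus H a s \<longrightarrow> H s p < a)" using P(5) .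
  show "minH H s = a \<Longrightarrow> Inf {p. H s p = a} = sigma_plus H a s \<and>
        (\<forall>p. p \<noteq> sigma_plus H a s \<longrightarrow> H s p > a)" using P(6) .
qed

end

lemma good_cont: "good H \<Longrightarrow> continuous_on ({0..1} \<times> UNIV) (\<lambda>(s, p). H s p)"
  unfolding good_def by blast

lemma good_coer: "good H \<Longrightarrow> \<forall>M. \<exists>R. \<forall>s\<in>{0..1}. \<forall>p. \<bar>p\<bar> \<ge> R \<longrightarrow> H s p \<ge> M"
  unfolding good_def by blast

lemma usc:
  fixes H :: "real \<Rightarrow> real \<Rightarrow> real" and a s0 \<epsilon> :: real
  assumes g: "good H" and mle: "\<forall>s\<in>{0..1}. minH H s \<le> a" and s0: "s0 \<in> {0..1}" and e: "\<epsilon> > 0"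
  shows "\<exists>r>0. \<forall>s\<in>{0..1}. \<bar>s - s0\<bar> < r \<longrightarrow> sigma_plus H a s < sigma_plus H a s0 + \<epsilon>"
proof -
  have hp: "\<forall>p'. p' \<ge> sigma_plus H a s0 + \<epsilon> \<longrightarrow> H s0 p' > a"
  proof (intro allI impI)
    fix p' assume "p' \<ge> sigma_plus H a s0 + \<epsilon>"
    show "H s0 p' > a"
    proof (rule ccontr)
      assume "\<not> H s0 p' > a"
      then have "p' \<le> sigma_plus H a s0" using pwH(2)[OF g s0 mle[rule_format, OF s0]] by simp
      then show False using \<open>p' \<ge> _\<close> e by linarith
    qed
  qed
  obtain r where r: "r > 0" "\<forall>s\<in>{0..1}. \<bar>s - s0\<bar> < r \<longrightarrow>
      (\<forall>p'. p' \<ge> sigma_plus H a s0 + \<epsilon> \<longrightarrow> H s p' > a)"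
    using U_gen[OF good_cont[OF g] good_coer[OF g] s0 hp] by blast
  show ?thesis
  proof (intro exI[of _ r] conjI ballI impI)
    show "r > 0" by fact
    fix s assume s: "s \<in> {0..1}" "\<bar>s - s0\<bar> < r"
    have "H s (sigma_plus H a s) = a" using pwH(1)[OF g s(1) mle[rule_format, OF s(1)]] .
    show "sigma_plus H a s < sigma_plus H a s0 + \<epsilon>"
    proof (rule ccontr)
      assume "\<not> sigma_plus H a s < sigma_plus H a s0 + \<epsilon>"
      then have "H s (sigma_plus H a s) > a" using r(2) s by auto
      then show False using \<open>H s (sigma_plus H a s) = a\<close> by simp
    qed
  qed
qed

lemma lsc_nondeg:
  fixes H :: "real \<Rightarrow> real \<Rightarrow> real" and a s0 \<epsilon> :: real
  assumes g: "good H" and mlt: "\<forall>s\<in>{0..1}. minH H s < a" and s0: "s0 \<in> {0..1}" and e: "\<epsilon> > 0"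
  shows "\<exists>r>0. \<forall>s\<in>{0..1}. \<bar>s - s0\<bar> < r \<longrightarrow> sigma_plus H a s > sigma_plus H a s0 - \<epsilon>"
proof -
  define m where "m = Inf {p. H s0 p = a}"
  define S where "S = sigma_plus H a s0"
  have mle: "\<forall>s\<in>{0..1}. minH H s \<le> a" using mlt by (simp add: less_imp_le)
  have nd: "m < S" "\<forall>p. m < p \<and> p < S \<longrightarrow> H s0 p < a"
    using pwH(5)[OF g s0 mle[rule_format, OF s0]] mlt s0 unfolding m_def S_def by auto
  define p' where "p' = S - min \<epsilon> (S - m) / 2"
  have p'1: "m < p'" "p' < S" "p' > S - \<epsilon>" using nd(1) e unfolding p'_def by (auto simp: min_def field_simps)
  have hlt: "H s0 p' < a" using nd(2) p'1 by blast
  have "continuous_on {0..1} (\<lambda>s. (\<lambda>(s, p). H s p) (s, p'))"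
    by (rule continuous_on_compose2[OF good_cont[OF g]]) (auto intro!: continuous_intros)
  then have cp: "continuous_on {0..1} (\<lambda>s. H s p')" by simp
  obtain d where d: "d > 0" "\<forall>s\<in>{0..1}. dist s s0 < d \<longrightarrow> dist (H s p') (H s0 p') < a - H s0 p'"
    using cp s0 hlt unfolding continuous_on_iff by (metis diff_gt_0_iff_gt)
  show ?thesis
  proof (intro exI[of _ d] conjI ballI impI)
    show "d > 0" by fact
    fix s assume s: "s \<in> {0..1}" "\<bar>s - s0\<bar> < d"
    then have "dist (H s p') (H s0 p') < a - H s0 p'" using d(2) by (simp add: dist_real_def)
    then have "H s p' \<le> a" by (simp add: dist_real_def)
    then have "p' \<le> sigma_plus H a s" using pwH(2)[OF g s(1) mle[rule_format, OF s(1)]] by simp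
    then show "sigma_plus H a s > sigma_plus H a s0 - \<epsilon>" using p'1 unfolding S_def by linarith
  qed
qed

lemma cont_from_semi:
  fixes f :: "real \<Rightarrow> real"
  assumes u: "\<forall>s0\<in>{0..1}. \<forall>\<epsilon>>0. \<exists>r>0. \<forall>s\<in>{0..1}. \<bar>s - s0\<bar> < r \<longrightarrow> f s < f s0 + \<epsilon>"
    and l: "\<forall>s0\<in>{0..1}. \<forall>\<epsilon>>0. \<exists>r>0. \<forall>s\<in>{0..1}. \<bar>s - s0\<bar> < r \<longrightarrow> f s > f s0 - \<epsilon>"
  shows "continuous_on {0..1} f"
  unfolding continuous_on_iff
proof (intro ballI allI impI)
  fix x e :: real assume x: "x \<in> {0..1}" and e: "e > 0"
  obtain r1 where r1: "r1 > 0" "\<forall>s\<in>{0..1}. \<bar>s - x\<bar> < r1 \<longrightarrow> f s < f x + e" using u x e by blast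
  obtain r2 where r2: "r2 > 0" "\<forall>s\<in>{0..1}. \<bar>s - x\<bar> < r2 \<longrightarrow> f s > f x - e" using l x e by blast
  show "\<exists>d>0. \<forall>x'\<in>{0..1}. dist x' x < d \<longrightarrow> dist (f x') (f x) < e"
  proof (intro exI[of _ "min r1 r2"] conjI ballI impI)
    show "min r1 r2 > 0" using r1 r2 by simp
    fix x' assume "x' \<in> {0..1}" "dist x' x < min r1 r2"
    then have "f x' < f x + e" "f x' > f x - e" using r1 r2 by (auto simp: dist_real_def)
    then show "dist (f x') (f x) < e" by (simp add: dist_real_def abs_less_iff)
  qed
qed

lemma sigma_cont_nondeg:
  fixes H :: "real \<Rightarrow> real \<Rightarrow> real" and a :: real
  assumes g: "good H" and mlt: "\<forall>s\<in>{0..1}. minH H s < a"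
  shows "continuous_on {0..1} (sigma_plus H a)"
proof (rule cont_from_semi)
  have mle: "\<forall>s\<in>{0..1}. minH H s \<le> a" using mlt by (simp add: less_imp_le)
  show "\<forall>s0\<in>{0..1}. \<forall>\<epsilon>>0. \<exists>r>0. \<forall>s\<in>{0..1}. \<bar>s - s0\<bar> < r \<longrightarrow> sigma_plus H a s < sigma_plus H a s0 + \<epsilon>"
    using usc[OF g mle] by blast
  show "\<forall>s0\<in>{0..1}. \<forall>\<epsilon>>0. \<exists>r>0. \<forall>s\<in>{0..1}. \<bar>s - s0\<bar> < r \<longrightarrow> sigma_plus H a s > sigma_plus H a s0 - \<epsilon>"
    using lsc_nondeg[OF g mlt] by blast
qed

lemma sigma_minus_cont_nondeg:
  fixes H :: "real \<Rightarrow> real \<Rightarrow> real" and a :: real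
  assumes g: "good H" and mlt: "\<forall>s\<in>{0..1}. minH H s < a"
  shows "continuous_on {0..1} (\<lambda>s. Inf {p. H s p = a})"
proof -
  have "continuous_on {0..1} (sigma_plus (\<lambda>s p. H s (- p)) a)"
    by (rule sigma_cont_nondeg[OF good_neg[OF g]]) (use mlt in \<open>simp add: minH_neg\<close>)
  then have "continuous_on {0..1} (\<lambda>s. - sigma_plus (\<lambda>s p. H s (- p)) a s)"
    by (intro continuous_intros)
  then show ?thesis by (simp add: sigma_neg)
qed

lemma sigma_cont_deg:
  fixes H :: "real \<Rightarrow> real \<Rightarrow> real" and a :: real
  assumes g: "good H" and meq: "\<forall>s\<in>{0..1}. minH H s = a"
  shows "continuous_on {0..1} (sigma_plus H a)"
proof (rule cont_from_semi)
  have mle: "\<forall>s\<in>{0..1}. minH H s \<le> a" using meq by simp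
  show "\<forall>s0\<in>{0..1}. \<forall>\<epsilon>>0. \<exists>r>0. \<forall>s\<in>{0..1}. \<bar>s - s0\<bar> < r \<longrightarrow> sigma_plus H a s < sigma_plus H a s0 + \<epsilon>"
    using usc[OF g mle] by blast
  have eqm: "sigma_plus (\<lambda>s p. H s (- p)) a s = - sigma_plus H a s" if "s \<in> {0..1}" for s
    using pwH(6)[OF g that mle[rule_format, OF that]] meq that by (simp add: sigma_neg)
  have mle': "\<forall>s\<in>{0..1}. minH (\<lambda>s p. H s (- p)) s \<le> a" using mle by (simp add: minH_neg)
  show "\<forall>s0\<in>{0..1}. \<forall>\<epsilon>>0. \<exists>r>0. \<forall>s\<in>{0..1}. \<bar>s - s0\<bar> < r \<longrightarrow> sigma_plus H a s > sigma_plus H a s0 - \<epsilon>"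
  proof (intro ballI allI impI)
    fix s0 \<epsilon> :: real assume s0: "s0 \<in> {0..1}" and e: "\<epsilon> > 0"
    obtain r where r: "r > 0" "\<forall>s\<in>{0..1}. \<bar>s - s0\<bar> < r \<longrightarrow>
       sigma_plus (\<lambda>s p. H s (- p)) a s < sigma_plus (\<lambda>s p. H s (- p)) a s0 + \<epsilon>"
      using usc[OF good_neg[OF g] mle' s0 e] by blast
    show "\<exists>r>0. \<forall>s\<in>{0..1}. \<bar>s - s0\<bar> < r \<longrightarrow> sigma_plus H a s > sigma_plus H a s0 - \<epsilon>"
    proof (intro exI[of _ r] conjI ballI impI)
      show "r > 0" by fact
      fix s assume s: "s \<in> {0..1}" "\<bar>s - s0\<bar> < r"
      then show "sigma_plus H a s > sigma_plus H a s0 - \<epsilon>" using r(2) eqm[OF s(1)] eqm[OF s0] by force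
    qed
  qed
qed



lemma core_max:
  fixes H :: "real \<Rightarrow> real \<Rightarrow> real" and a al be z :: real and w phi dphi :: "real \<Rightarrow> real"
  assumes sub: "visc_sub H a w" and wc: "continuous_on {0..1} w" and C1: "C1_open phi dphi"
    and pc: "continuous_on {al..be} phi" and ab: "0 \<le> al" "al < z" "z < be" "be \<le> 1"
    and g1: "w z - phi z > w al - phi al" and g2: "w z - phi z > w be - phi be"
    and bad: "\<forall>x\<in>{al<..<be}. H x (dphi x) > a"
  shows False
proof -
  have fc: "continuous_on {al..be} (\<lambda>x. w x - phi x)"
    using wc pc ab by (intro continuous_intros) (auto intro: continuous_on_subset)
  obtain x1 where x1: "x1 \<in> {al..be}" "\<forall>y\<in>{al..be}. w y - phi y \<le> w x1 - phi x1"
    using continuous_attains_sup[OF _ _ fc] ab by auto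
  have "w z - phi z \<le> w x1 - phi x1" using x1 ab by auto
  then have "x1 \<noteq> al" "x1 \<noteq> be" using g1 g2 by auto
  then have x1i: "al < x1" "x1 < be" using x1(1) by auto
  define e where "e = min (x1 - al) (be - x1)"
  have e: "e > 0" using x1i unfolding e_def by auto
  have loc: "\<exists>e>0. \<forall>y\<in>{0<..<1}. \<bar>y - x1\<bar> < e \<longrightarrow> w y - phi y \<le> w x1 - phi x1"
  proof (intro exI[of _ e] conjI ballI impI)
    show "e > 0" by fact
    fix y assume "y \<in> {0<..<1}" "\<bar>y - x1\<bar> < e"
    then have "y \<in> {al..be}" unfolding e_def by (auto simp: abs_less_iff)
    then show "w y - phi y \<le> w x1 - phi x1" using x1(2) by blast
  qed
  have "x1 \<in> {0<..<1}" using x1i ab by auto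
  then have "H x1 (dphi x1) \<le> a" using sub C1 loc unfolding visc_sub_def by blast
  moreover have "H x1 (dphi x1) > a" using bad x1i by auto
  ultimately show False by simp
qed

lemma core_min:
  fixes H :: "real \<Rightarrow> real \<Rightarrow> real" and a al be z :: real and w phi dphi :: "real \<Rightarrow> real"
  assumes sup: "visc_super H a w" and wc: "continuous_on {0..1} w" and C1: "C1_open phi dphi"
    and pc: "continuous_on {al..be} phi" and ab: "0 \<le> al" "al < z" "z < be" "be \<le> 1"
    and g1: "w z - phi z < w al - phi al" and g2: "w z - phi z < w be - phi be"
    and bad: "\<forall>x\<in>{al<..<be}. H x (dphi x) < a"
  shows False
proof -
  have fc: "continuous_on {al..be} (\<lambda>x. w x - phi x)"
    using wc pc ab by (intro continuous_intros) (auto intro: continuous_on_subset)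
  obtain x1 where x1: "x1 \<in> {al..be}" "\<forall>y\<in>{al..be}. w x1 - phi x1 \<le> w y - phi y"
    using continuous_attains_inf[OF _ _ fc] ab by auto
  have "w x1 - phi x1 \<le> w z - phi z" using x1 ab by auto
  then have "x1 \<noteq> al" "x1 \<noteq> be" using g1 g2 by auto
  then have x1i: "al < x1" "x1 < be" using x1(1) by auto
  define e where "e = min (x1 - al) (be - x1)"
  have e: "e > 0" using x1i unfolding e_def by auto
  have loc: "\<exists>e>0. \<forall>y\<in>{0<..<1}. \<bar>y - x1\<bar> < e \<longrightarrow> w y - phi y \<ge> w x1 - phi x1"
  proof (intro exI[of _ e] conjI ballI impI)
    show "e > 0" by fact
    fix y assume "y \<in> {0<..<1}" "\<bar>y - x1\<bar> < e"
    then have "y \<in> {al..be}" unfolding e_def by (auto simp: abs_less_iff)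
    then show "w y - phi y \<ge> w x1 - phi x1" using x1(2) by blast
  qed
  have "x1 \<in> {0<..<1}" using x1i ab by auto
  then have "H x1 (dphi x1) \<ge> a" using sup C1 loc unfolding visc_super_def by blast
  moreover have "H x1 (dphi x1) < a" using bad x1i by auto
  ultimately show False by simp
qed

lemma quad_C1: "C1_open (\<lambda>x. p * (x - x0) + K * (x - x0)^2) (\<lambda>x. p + 2 * K * (x - x0))"
  unfolding C1_open_def
proof (intro conjI ballI)
  fix x :: real
  show "((\<lambda>x. p * (x - x0) + K * (x - x0)^2) has_real_derivative p + 2 * K * (x - x0)) (at x)"
    by (auto intro!: derivative_eq_intros simp: algebra_simps)
next
  show "continuous_on {0<..<1} (\<lambda>x. p + 2 * K * (x - x0))" by (intro continuous_intros)
qed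

lemma right_dini:
  fixes H :: "real \<Rightarrow> real \<Rightarrow> real" and a p q r x0 :: real and w :: "real \<Rightarrow> real"
  assumes sub: "visc_sub H a w" and wc: "continuous_on {0..1} w" and x0: "x0 \<in> {0<..<1}"
    and r: "r > 0" and hyp: "\<forall>s\<in>{0..1}. \<bar>s - x0\<bar> < r \<longrightarrow> (\<forall>p'. p' \<ge> p \<longrightarrow> H s p' > a)"
    and q: "q > p"
  shows "\<exists>\<delta>>0. \<forall>h. 0 < h \<and> h < \<delta> \<longrightarrow> w (x0 + h) - w x0 \<le> q * h"
proof -
  define r' where "r' = min (r/2) ((1 - x0)/2)"
  have r'0: "r' > 0" "r' < r" "x0 + r' < 1" using r x0 unfolding r'_def by (auto simp: min_def field_simps)
  define X where "X = w (x0 + r') - w x0 - p * r'"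
  define K where "K = \<bar>X\<bar> / r'^2 + 1"
  have K0: "K > 0"
  proof -
    have "\<bar>X\<bar> / r'^2 \<ge> 0" by simp
    then show ?thesis unfolding K_def by linarith
  qed
  have Kr: "K * r'^2 > X"
  proof -
    have "K * r'^2 = \<bar>X\<bar> + r'^2" unfolding K_def using r'0 by (simp add: field_simps)
    then show ?thesis using r'0 by (smt (verit) zero_less_power)
  qed
  define \<delta> where "\<delta> = min r' ((q - p) / K)"
  have d0: "\<delta> > 0" using r'0 K0 q unfolding \<delta>_def by auto
  show ?thesis
  proof (intro exI[of _ \<delta>] conjI allI impI)
    show "\<delta> > 0" by fact
    fix h assume h: "0 < h \<and> h < \<delta>"
    show "w (x0 + h) - w x0 \<le> q * h"
    proof (rule ccontr)
      assume c: "\<not> ?thesis"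
      define phi where "phi = (\<lambda>x. p * (x - x0) + K * (x - x0)^2)"
      define dphi where "dphi = (\<lambda>x. p + 2 * K * (x - x0))"
      have hK: "K * h < q - p" using h K0 unfolding \<delta>_def by (simp add: less_divide_eq mult.commute)
      have pos: "h * (q - p - K * h) > 0" using h hK by simp
      show False
      proof (rule core_max[OF sub wc, where phi=phi and dphi=dphi and al=x0 and z="x0 + h" and be="x0 + r'"])
        show "C1_open phi dphi" unfolding phi_def dphi_def by (rule quad_C1)
        show "continuous_on {x0..x0 + r'} phi" unfolding phi_def by (intro continuous_intros)
        show "0 \<le> x0" "x0 < x0 + h" "x0 + h < x0 + r'" "x0 + r' \<le> 1"
          using x0 h r'0 unfolding \<delta>_def by auto
        have "w (x0 + h) - phi (x0 + h) - (w x0 - phi x0) = (w (x0 + h) - w x0) - p * h - K * h^2"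
          unfolding phi_def by (simp add: power2_eq_square)
        also have "\<dots> > q * h - p * h - K * h^2" using c by simp
        also have "q * h - p * h - K * h^2 = h * (q - p - K * h)" by (simp add: algebra_simps power2_eq_square)
        finally show g1: "w (x0 + h) - phi (x0 + h) > w x0 - phi x0" using pos by linarith
        have "w (x0 + r') - phi (x0 + r') = w x0 + X - K * r'^2" unfolding phi_def X_def by simp
        then have "w (x0 + r') - phi (x0 + r') < w x0 - phi x0" using Kr unfolding phi_def by simp
        then show "w (x0 + h) - phi (x0 + h) > w (x0 + r') - phi (x0 + r')" using g1 by linarith
        show "\<forall>x\<in>{x0<..<x0 + r'}. H x (dphi x) > a"
        proof
          fix x assume x: "x \<in> {x0<..<x0 + r'}"
          then have "x \<in> {0..1}" "\<bar>x - x0\<bar> < r" using x0 r'0 by auto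
          moreover have "dphi x \<ge> p" using x K0 unfolding dphi_def by simp
          ultimately show "H x (dphi x) > a" using hyp by blast
        qed
      qed
    qed
  qed
qed

lemma left_dini:
  fixes H :: "real \<Rightarrow> real \<Rightarrow> real" and a p q r x0 :: real and w :: "real \<Rightarrow> real"
  assumes sub: "visc_sub H a w" and wc: "continuous_on {0..1} w" and x0: "x0 \<in> {0<..<1}"
    and r: "r > 0" and hyp: "\<forall>s\<in>{0..1}. \<bar>s - x0\<bar> < r \<longrightarrow> (\<forall>p'. p' \<le> p \<longrightarrow> H s p' > a)"
    and q: "q < p"
  shows "\<exists>\<delta>>0. \<forall>h. 0 < h \<and> h < \<delta> \<longrightarrow> w x0 - w (x0 - h) \<ge> q * h"
proof -
  define r' where "r' = min (r/2) (x0/2)"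
  have r'0: "r' > 0" "r' < r" "x0 - r' > 0" using r x0 unfolding r'_def by (auto simp: min_def field_simps)
  define X where "X = w (x0 - r') - w x0 + p * r'"
  define K where "K = \<bar>X\<bar> / r'^2 + 1"
  have K0: "K > 0"
  proof -
    have "\<bar>X\<bar> / r'^2 \<ge> 0" by simp
    then show ?thesis unfolding K_def by linarith
  qed
  have Kr: "K * r'^2 > X"
  proof -
    have "K * r'^2 = \<bar>X\<bar> + r'^2" unfolding K_def using r'0 by (simp add: field_simps)
    then show ?thesis using r'0 by (smt (verit) zero_less_power)
  qed
  define \<delta> where "\<delta> = min r' ((p - q) / K)"
  have d0: "\<delta> > 0" using r'0 K0 q unfolding \<delta>_def by auto
  show ?thesis
  proof (intro exI[of _ \<delta>] conjI allI impI)
    show "\<delta> > 0" by fact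
    fix h assume h: "0 < h \<and> h < \<delta>"
    show "w x0 - w (x0 - h) \<ge> q * h"
    proof (rule ccontr)
      assume c: "\<not> ?thesis"
      define phi where "phi = (\<lambda>x. p * (x - x0) + K * (x - x0)^2)"
      define dphi where "dphi = (\<lambda>x. p + 2 * K * (x - x0))"
      have hK: "K * h < p - q" using h K0 unfolding \<delta>_def by (simp add: less_divide_eq mult.commute)
      have pos: "h * (p - q - K * h) > 0" using h hK by simp
      show False
      proof (rule core_max[OF sub wc, where phi=phi and dphi=dphi and al="x0 - r'" and z="x0 - h" and be=x0])
        show "C1_open phi dphi" unfolding phi_def dphi_def by (rule quad_C1)
        show "continuous_on {x0 - r'..x0} phi" unfolding phi_def by (intro continuous_intros)
        show "0 \<le> x0 - r'" "x0 - r' < x0 - h" "x0 - h < x0" "x0 \<le> 1"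
          using x0 h r'0 unfolding \<delta>_def by auto
        have "w (x0 - h) - phi (x0 - h) - (w x0 - phi x0) = (w (x0 - h) - w x0) + p * h - K * h^2"
          unfolding phi_def by (simp add: power2_eq_square)
        also have "\<dots> > - q * h + p * h - K * h^2" using c by simp
        also have "- q * h + p * h - K * h^2 = h * (p - q - K * h)" by (simp add: algebra_simps power2_eq_square)
        finally show g1: "w (x0 - h) - phi (x0 - h) > w x0 - phi x0" using pos by linarith
        have "w (x0 - r') - phi (x0 - r') = w x0 + X - K * r'^2" unfolding phi_def X_def
          by (simp add: power2_eq_square)
        then have "w (x0 - r') - phi (x0 - r') < w x0 - phi x0" using Kr unfolding phi_def by simp
        then show "w (x0 - h) - phi (x0 - h) > w (x0 - r') - phi (x0 - r')" using g1 by linarith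
        show "\<forall>x\<in>{x0 - r'<..<x0}. H x (dphi x) > a"
        proof
          fix x assume x: "x \<in> {x0 - r'<..<x0}"
          then have "x \<in> {0..1}" "\<bar>x - x0\<bar> < r" using x0 r'0 by auto
          moreover have "dphi x \<le> p" using x K0 unfolding dphi_def
            by (simp add: mult_nonneg_nonpos)
          ultimately show "H x (dphi x) > a" using hyp by blast
        qed
      qed
    qed
  qed
qed




lemma cont_le_closed:
  fixes f :: "real \<Rightarrow> real"
  assumes ab: "a < b" and fc: "continuous_on {a..b} f" and le: "\<forall>x\<in>{a<..<b}. f x \<le> c"
  shows "\<forall>x\<in>{a..b}. f x \<le> c"
proof -
  have cl: "closed {x \<in> {a..b}. f x \<le> c}"
    by (rule continuous_on_closed_Collect_le[OF fc]) (auto intro: continuous_intros)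
  have "{a<..<b} \<subseteq> {x \<in> {a..b}. f x \<le> c}" using le by auto
  then have "closure {a<..<b} \<subseteq> {x \<in> {a..b}. f x \<le> c}" using cl by (rule closure_minimal)
  then show ?thesis using ab by auto
qed

lemma mono_dini_core:
  fixes g :: "real \<Rightarrow> real"
  assumes st: "s \<le> t" and gc: "continuous_on {s..t} g"
    and D: "\<forall>x\<in>{s..<t}. \<forall>\<epsilon>>0. \<exists>\<delta>>0. \<forall>h. 0 < h \<and> h < \<delta> \<longrightarrow> g (x + h) \<le> g x + \<epsilon> * h"
  shows "g t \<le> g s"
proof -
  have main: "g t \<le> g s + \<epsilon> * (t - s)" if e: "\<epsilon> > 0" for \<epsilon>
  proof -
    define S where "S = {x \<in> {s..t}. g x \<le> g s + \<epsilon> * (x - s)}"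
    have cl: "closed S" unfolding S_def
      by (rule continuous_on_closed_Collect_le[OF gc]) (auto intro!: continuous_intros)
    have sS: "s \<in> S" using st unfolding S_def by auto
    have ne: "S \<noteq> {}" using sS by auto
    have bd: "bdd_above S" unfolding S_def by (rule bdd_aboveI[of _ t]) auto
    define m where "m = Sup S"
    have mS: "m \<in> S" unfolding m_def by (rule closed_contains_Sup[OF ne bd cl])
    have mt: "m \<le> t" using mS unfolding S_def by auto
    have "m = t"
    proof (rule ccontr)
      assume "m \<noteq> t"
      then have mlt: "m < t" using mt by simp
      have ms: "s \<le> m" using mS unfolding S_def by auto
      obtain \<delta> where d: "\<delta> > 0" "\<forall>h. 0 < h \<and> h < \<delta> \<longrightarrow> g (m + h) \<le> g m + \<epsilon> * h"
      proof -
        have "m \<in> {s..<t}" using ms mlt by simp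
        then show ?thesis using D e that by blast
      qed
      define h where "h = min (\<delta>/2) ((t - m)/2)"
      have h: "0 < h" "h < \<delta>" "m + h \<le> t" using d(1) mlt unfolding h_def by (auto simp: min_def field_simps)
      have "g (m + h) \<le> g m + \<epsilon> * h" using d h by blast
      also have "\<dots> \<le> g s + \<epsilon> * (m - s) + \<epsilon> * h" using mS unfolding S_def by auto
      finally have "m + h \<in> S" using ms h unfolding S_def by (auto simp: algebra_simps)
      then have "m + h \<le> m" unfolding m_def by (rule cSup_upper[OF _ bd])
      then show False using h by simp
    qed
    then show ?thesis using mS unfolding S_def by auto
  qed
  show ?thesis
  proof (rule ccontr)
    assume c: "\<not> g t \<le> g s"
    then have ts: "t > s" using st by (cases "t = s") auto
    define \<epsilon> where "\<epsilon> = (g t - g s) / (2 * (t - s))"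
    have e: "\<epsilon> > 0" using c ts unfolding \<epsilon>_def by simp
    have hx: "\<epsilon> * (t - s) = (g t - g s) / 2" using ts unfolding \<epsilon>_def by (simp add: field_simps)
    have "g t \<le> g s + (g t - g s) / 2" using main[OF e, unfolded hx] .
    then show False using c by (simp add: field_simps)
  qed
qed

lemma mono_dini:
  fixes g :: "real \<Rightarrow> real"
  assumes st: "s < t" and gc: "continuous_on {s..t} g"
    and D: "\<forall>x\<in>{s<..<t}. \<forall>\<epsilon>>0. \<exists>\<delta>>0. \<forall>h. 0 < h \<and> h < \<delta> \<longrightarrow> g (x + h) \<le> g x + \<epsilon> * h"
  shows "g t \<le> g s"
proof -
  have inner: "g y \<le> g x" if "s < x" "x \<le> y" "y < t" for x y
    by (rule mono_dini_core[OF that(2)]) (use gc D that in \<open>auto intro: continuous_on_subset\<close>)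
  have step: "g t \<le> g x" if x: "s < x" "x < t" for x
  proof -
    have "\<forall>y\<in>{x..t}. g y \<le> g x"
      by (rule cont_le_closed[OF x(2)]) (use gc inner x in \<open>auto intro: continuous_on_subset\<close>)
    then show ?thesis using x by auto
  qed
  have "\<forall>x\<in>{s..t}. - g x \<le> - g t"
    by (rule cont_le_closed[OF st]) (use gc step in \<open>auto intro!: continuous_intros\<close>)
  then show ?thesis using st by auto
qed

lemma mono_dini_left:
  fixes g :: "real \<Rightarrow> real"
  assumes st: "s < t" and gc: "continuous_on {s..t} g"
    and D: "\<forall>x\<in>{s<..<t}. \<forall>\<epsilon>>0. \<exists>\<delta>>0. \<forall>h. 0 < h \<and> h < \<delta> \<longrightarrow> g (x - h) \<le> g x + \<epsilon> * h"
  shows "g s \<le> g t"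
proof -
  have c2: "continuous_on {-t..-s} (\<lambda>y. g (- y))"
    by (rule continuous_on_compose2[OF gc]) (auto intro!: continuous_intros)
  have "(\<lambda>y. g (- y)) (- s) \<le> (\<lambda>y. g (- y)) (- t)"
  proof (rule mono_dini[OF _ c2])
    show "- t < - s" using st by simp
    show "\<forall>x\<in>{- t<..<- s}. \<forall>\<epsilon>>0. \<exists>\<delta>>0. \<forall>h. 0 < h \<and> h < \<delta> \<longrightarrow> g (- (x + h)) \<le> g (- x) + \<epsilon> * h"
    proof (intro ballI allI impI)
      fix x \<epsilon> :: real assume x: "x \<in> {- t<..<- s}" and e: "\<epsilon> > 0"
      then have "- x \<in> {s<..<t}" by auto
      then obtain \<delta> where "\<delta> > 0" "\<forall>h. 0 < h \<and> h < \<delta> \<longrightarrow> g (- x - h) \<le> g (- x) + \<epsilon> * h"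
        using D e by blast
      then show "\<exists>\<delta>>0. \<forall>h. 0 < h \<and> h < \<delta> \<longrightarrow> g (- (x + h)) \<le> g (- x) + \<epsilon> * h" by auto
    qed
  qed
  then show ?thesis by simp
qed

lemma deriv_bounds:
  fixes f :: "real \<Rightarrow> real"
  assumes der: "(f has_real_derivative D) (at x)" and e: "\<epsilon> > 0"
  shows "\<exists>\<delta>>0. \<forall>h. 0 < h \<and> h < \<delta> \<longrightarrow>
     f (x + h) - f x \<le> (D + \<epsilon>) * h \<and> f (x + h) - f x \<ge> (D - \<epsilon>) * h \<and>
     f x - f (x - h) \<le> (D + \<epsilon>) * h \<and> f x - f (x - h) \<ge> (D - \<epsilon>) * h"
proof -
  from der [THEN has_field_derivativeD, THEN tendstoD, OF e, unfolded eventually_at]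
  obtain s where s: "0 < s"
    and all: "\<And>y. y \<noteq> x \<and> dist y x < s \<longrightarrow> dist ((f y - f x) / (y - x)) D < \<epsilon>"
    by auto
  show ?thesis
  proof (intro exI[of _ s] conjI allI impI)
    show "s > 0" by fact
    fix h :: real assume h: "0 < h \<and> h < s"
    have "dist ((f (x + h) - f x) / (x + h - x)) D < \<epsilon>" using all[of "x + h"] h by (simp add: dist_real_def)
    then have a1: "\<bar>(f (x + h) - f x) / h - D\<bar> < \<epsilon>" by (simp add: dist_real_def)
    have "dist ((f (x - h) - f x) / (x - h - x)) D < \<epsilon>" using all[of "x - h"] h by (simp add: dist_real_def)
    then have a2': "\<bar>D + (f (x - h) - f x) / h\<bar> < \<epsilon>" by (simp add: dist_real_def)
    have "D + (f (x - h) - f x) / h = - ((f x - f (x - h)) / h - D)" using h by (simp add: field_simps)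
    then have a2: "\<bar>(f x - f (x - h)) / h - D\<bar> < \<epsilon>" using a2' by simp
    have hp: "h > 0" using h by simp
    from a1 have "(f (x + h) - f x) / h < D + \<epsilon>" "(f (x + h) - f x) / h > D - \<epsilon>" by (auto simp: abs_less_iff)
    then have b1: "f (x + h) - f x < (D + \<epsilon>) * h" "f (x + h) - f x > (D - \<epsilon>) * h"
      using hp by (simp_all add: divide_less_eq less_divide_eq)
    from a2 have "(f x - f (x - h)) / h < D + \<epsilon>" "(f x - f (x - h)) / h > D - \<epsilon>" by (auto simp: abs_less_iff)
    then have b2: "f x - f (x - h) < (D + \<epsilon>) * h" "f x - f (x - h) > (D - \<epsilon>) * h"
      using hp by (simp_all add: divide_less_eq less_divide_eq)
    show "f (x + h) - f x \<le> (D + \<epsilon>) * h" using b1 by simp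
    show "f (x + h) - f x \<ge> (D - \<epsilon>) * h" using b1 by simp
    show "f x - f (x - h) \<le> (D + \<epsilon>) * h" using b2 by simp
    show "f x - f (x - h) \<ge> (D - \<epsilon>) * h" using b2 by simp
  qed
qed



lemma slice_min:
  assumes g: "good H" and s: "s \<in> {0..1}"
  shows "bdd_below (range (H s))" "minH H s \<le> H s p"
proof -
  have fc: "continuous_on UNIV (H s)" and co: "\<forall>M. \<exists>R. \<forall>p. \<bar>p\<bar> \<ge> R \<longrightarrow> H s p \<ge> M"
    using good_slice[OF g s] by auto
  obtain R0 where R0: "\<forall>p. \<bar>p\<bar> \<ge> R0 \<longrightarrow> H s p \<ge> H s 0" using co by blast
  obtain pm where pm: "pm \<in> {-\<bar>R0\<bar>..\<bar>R0\<bar>}" "\<forall>y\<in>{-\<bar>R0\<bar>..\<bar>R0\<bar>}. H s pm \<le> H s y"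
    using continuous_attains_inf[of "{-\<bar>R0\<bar>..\<bar>R0\<bar>}" "H s"] fc continuous_on_subset by force
  have pmin: "\<forall>p. H s pm \<le> H s p"
  proof
    fix p show "H s pm \<le> H s p"
    proof (cases "\<bar>p\<bar> \<ge> R0")
      case True
      then have "H s p \<ge> H s 0" using R0 by blast
      moreover have "H s pm \<le> H s 0" using pm by auto
      ultimately show ?thesis by linarith
    next
      case False
      then have "p \<in> {-\<bar>R0\<bar>..\<bar>R0\<bar>}" by auto
      then show ?thesis using pm(2) by blast
    qed
  qed
  show bb: "bdd_below (range (H s))" using pmin by (auto intro: bdd_belowI)
  show "minH H s \<le> H s p" unfolding minH_def by (rule cInf_lower[OF _ bb]) simp
qed

theorem proposition5p3:
  fixes H :: "real \<Rightarrow> real \<Rightarrow> real" and a :: real and w :: "real \<Rightarrow> real"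
  assumes H_cont: "continuous_on ({0..1} \<times> UNIV) (\<lambda>(s, p). H s p)"
    and H_coercive: "\<forall>M. \<exists>R. \<forall>s\<in>{0..1}. \<forall>p. \<bar>p\<bar> \<ge> R \<longrightarrow> H s p \<ge> M"
    and H_qconv: "\<forall>s\<in>{0..1}. \<forall>b. convex {p. H s p \<le> b}"
    and H_int: "\<forall>s\<in>{0..1}. \<forall>b. interior {p. H s p \<le> b} = {p. H s p < b}"
    and a_ge: "a \<ge> aH H"
    and a_eq: "a = aH H \<longrightarrow> (\<exists>c. \<forall>s\<in>{0..1}. minH H s = c)"
    and w_cont: "continuous_on {0..1} w"
    and w_sol: "visc_sol H a w"
  shows "(\<forall>phi dphi. C1_closed phi dphi \<and> phi 1 = w 1 \<and>
             (\<exists>\<delta>>0. \<forall>s\<in>{1-\<delta><..<1}. w s \<ge> phi s) \<longrightarrow> H 1 (dphi 1) \<ge> a)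
         \<longleftrightarrow> (\<forall>s\<in>{0..1}. w s = w 0 + integral {0..s} (sigma_plus H a))"
proof -
  have g: "good H" unfolding good_def by (intro conjI H_cont H_coercive H_qconv H_int)
  have sub: "visc_sub H a w" and sup: "visc_super H a w" using w_sol unfolding visc_sol_def by auto
  have bddA: "bdd_above (minH H ` {0..1})"
  proof -
    have "continuous_on {0..1} (\<lambda>s. (\<lambda>(s, p). H s p) (s, 0))"
      by (rule continuous_on_compose2[OF H_cont]) (auto intro!: continuous_intros)
    then have c0: "continuous_on {0..1} (\<lambda>s. H s 0)" by simp
    obtain sM where sM: "sM \<in> {0..1}" "\<forall>y\<in>{0..1}. H y 0 \<le> H sM 0"
      using continuous_attains_sup[OF _ _ c0] by auto
    show ?thesis
    proof (rule bdd_aboveI[of _ "H sM 0"])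
      fix x assume "x \<in> minH H ` {0..1}"
      then obtain s where s: "s \<in> {0..1}" "x = minH H s" by blast
      then have "x \<le> H s 0" using slice_min(2)[OF g s(1)] by simp
      then show "x \<le> H sM 0" using sM s by force
    qed
  qed
  have le_aH: "\<forall>s\<in>{0..1}. minH H s \<le> aH H" unfolding aH_def using cSup_upper[OF _ bddA] by auto
  have cases: "(\<forall>s\<in>{0..1}. minH H s < a) \<or> (\<forall>s\<in>{0..1}. minH H s = a)"
  proof (cases "a = aH H")
    case True
    then obtain c where c: "\<forall>s\<in>{0..1}. minH H s = c" using a_eq by blast
    have "minH H ` {0..1} = {c}"
    proof
      show "minH H ` {0..1} \<subseteq> {c}" using c by auto
      show "{c} \<subseteq> minH H ` {0..1}" using c by (auto intro!: image_eqI[of c _ 0])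
    qed
    then have "aH H = c" unfolding aH_def by simp
    then show ?thesis using c True by auto
  next
    case False
    then have "a > aH H" using a_ge by simp
    then show ?thesis using le_aH by force
  qed
  have mle: "\<forall>s\<in>{0..1}. minH H s \<le> a" using cases by force
  have sc: "continuous_on {0..1} (sigma_plus H a)"
    using cases sigma_cont_nondeg[OF g] sigma_cont_deg[OF g] by blast
  define sp where "sp = sigma_plus H a"
  define W where "W = (\<lambda>x. integral {0..x} sp)"
  have spc: "continuous_on {0..1} sp" using sc unfolding sp_def .
  have WD: "(W has_real_derivative sp x) (at x within {0..1})" if "x \<in> {0..1}" for x
    unfolding W_def by (rule integral_has_real_derivative[OF spc that])
  have WDi: "(W has_real_derivative sp x) (at x)" if "x \<in> {0<..<1}" for x
    using WD[of x] that at_within_Icc_at[of 0 x 1] by auto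
  have Wc: "continuous_on {0..1} W" by (rule DERIV_continuous_on[OF WD])
  have W0: "W 0 = 0" unfolding W_def by simp
  define G where "G = (\<lambda>x. w x - W x)"
  have Gc: "continuous_on {0..1} G" unfolding G_def using w_cont Wc by (intro continuous_intros)
  have Gmono: "G y \<le> G x" if xy0: "0 \<le> x" "x \<le> y" "y \<le> 1" for x y
  proof (cases "x = y")
    case True then show ?thesis by simp
  next
    case False
    then have xy: "x < y" using xy0 by simp
    show ?thesis
    proof (rule mono_dini[OF xy])
      show "continuous_on {x..y} G" by (rule continuous_on_subset[OF Gc]) (use xy0 in auto)
      show "\<forall>z\<in>{x<..<y}. \<forall>\<epsilon>>0. \<exists>\<delta>>0. \<forall>h. 0 < h \<and> h < \<delta> \<longrightarrow> G (z + h) \<le> G z + \<epsilon> * h"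
      proof (intro ballI allI impI)
        fix z \<epsilon> :: real assume z: "z \<in> {x<..<y}" and e: "\<epsilon> > 0"
        define e4 where "e4 = \<epsilon> / 4"
        have e4: "e4 > 0" "\<epsilon> = 4 * e4" using e unfolding e4_def by auto
        have z01: "z \<in> {0<..<1}" "z \<in> {0..1}" using z xy0 by auto
        obtain r where r: "r > 0" "\<forall>s\<in>{0..1}. \<bar>s - z\<bar> < r \<longrightarrow> sp s < sp z + e4"
          using usc[OF g mle z01(2) e4(1)] unfolding sp_def by auto
        have hyp: "\<forall>s\<in>{0..1}. \<bar>s - z\<bar> < r \<longrightarrow> (\<forall>p'. p' \<ge> sp z + e4 \<longrightarrow> H s p' > a)"
        proof (intro ballI impI allI)
          fix s p' assume s: "s \<in> {0..1}" "\<bar>s - z\<bar> < r" and p': "p' \<ge> sp z + e4"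
          show "H s p' > a"
          proof (rule ccontr)
            assume "\<not> H s p' > a"
            then have "p' \<le> sp s" using pwH(2)[OF g s(1) mle[rule_format, OF s(1)]] unfolding sp_def by simp
            moreover have "sp s < sp z + e4" using r(2) s by blast
            ultimately show False using p' by linarith
          qed
        qed
        have q: "sp z + 2 * e4 > sp z + e4" using e4 by simp
        obtain \<delta>1 where d1: "\<delta>1 > 0" "\<forall>h. 0 < h \<and> h < \<delta>1 \<longrightarrow> w (z + h) - w z \<le> (sp z + 2 * e4) * h"
          using right_dini[OF sub w_cont z01(1) r(1) hyp q] by blast
        have "2 * e4 > 0" using e4 by simp
        from deriv_bounds[OF WDi[OF z01(1)] this]
        obtain \<delta>2 where d2: "\<delta>2 > 0" "\<forall>h. 0 < h \<and> h < \<delta>2 \<longrightarrow> W (z + h) - W z \<ge> (sp z - 2 * e4) * h"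
          by blast
        show "\<exists>\<delta>>0. \<forall>h. 0 < h \<and> h < \<delta> \<longrightarrow> G (z + h) \<le> G z + \<epsilon> * h"
        proof (intro exI[of _ "min \<delta>1 \<delta>2"] conjI allI impI)
          show "min \<delta>1 \<delta>2 > 0" using d1 d2 by simp
          fix h assume h: "0 < h \<and> h < min \<delta>1 \<delta>2"
          then have b: "w (z + h) - w z \<le> (sp z + 2 * e4) * h" "W (z + h) - W z \<ge> (sp z - 2 * e4) * h"
            using d1 d2 by auto
          have eq: "(sp z + 2 * e4) * h - (sp z - 2 * e4) * h = \<epsilon> * h" using e4(2) by (simp add: algebra_simps)
          show "G (z + h) \<le> G z + \<epsilon> * h" unfolding G_def using b eq by linarith
        qed
      qed
    qed
  qed
  show ?thesis
  proof
    assume P1: "\<forall>phi dphi. C1_closed phi dphi \<and> phi 1 = w 1 \<and>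
             (\<exists>\<delta>>0. \<forall>s\<in>{1-\<delta><..<1}. w s \<ge> phi s) \<longrightarrow> H 1 (dphi 1) \<ge> a"
    from cases show "\<forall>s\<in>{0..1}. w s = w 0 + integral {0..s} (sigma_plus H a)"
    proof
      assume deg: "\<forall>s\<in>{0..1}. minH H s = a"
      have Gmono2: "G x \<le> G y" if xy0: "0 \<le> x" "x \<le> y" "y \<le> 1" for x y
      proof (cases "x = y")
        case True then show ?thesis by simp
      next
        case False
        then have xy: "x < y" using xy0 by simp
        show ?thesis
        proof (rule mono_dini_left[OF xy])
          show "continuous_on {x..y} G" by (rule continuous_on_subset[OF Gc]) (use xy0 in auto)
          show "\<forall>z\<in>{x<..<y}. \<forall>\<epsilon>>0. \<exists>\<delta>>0. \<forall>h. 0 < h \<and> h < \<delta> \<longrightarrow> G (z - h) \<le> G z + \<epsilon> * h"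
          proof (intro ballI allI impI)
            fix z \<epsilon> :: real assume z: "z \<in> {x<..<y}" and e: "\<epsilon> > 0"
            define e4 where "e4 = \<epsilon> / 4"
            have e4: "e4 > 0" "\<epsilon> = 4 * e4" using e unfolding e4_def by auto
            have z01: "z \<in> {0<..<1}" "z \<in> {0..1}" using z xy0 by auto
            obtain r where r: "r > 0" "\<forall>s\<in>{0..1}. dist s z < r \<longrightarrow> dist (sp s) (sp z) < e4"
              using spc z01(2) e4(1) unfolding continuous_on_iff by blast
            have hyp: "\<forall>s\<in>{0..1}. \<bar>s - z\<bar> < r \<longrightarrow> (\<forall>p'. p' \<le> sp z - e4 \<longrightarrow> H s p' > a)"
            proof (intro ballI impI allI)
              fix s p' assume s: "s \<in> {0..1}" "\<bar>s - z\<bar> < r" and p': "p' \<le> sp z - e4"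
              have "dist (sp s) (sp z) < e4" using r(2) s by (simp add: dist_real_def)
              then have "sp s > sp z - e4" by (simp add: dist_real_def abs_less_iff)
              then have "p' \<noteq> sp s" using p' by linarith
              then show "H s p' > a" using pwH(6)[OF g s(1) mle[rule_format, OF s(1)]] deg s(1)
                unfolding sp_def by blast
            qed
            have q: "sp z - 2 * e4 < sp z - e4" using e4 by simp
            obtain \<delta>1 where d1: "\<delta>1 > 0" "\<forall>h. 0 < h \<and> h < \<delta>1 \<longrightarrow> w z - w (z - h) \<ge> (sp z - 2 * e4) * h"
              using left_dini[OF sub w_cont z01(1) r(1) hyp q] by blast
            have "2 * e4 > 0" using e4 by simp
            from deriv_bounds[OF WDi[OF z01(1)] this]
            obtain \<delta>2 where d2: "\<delta>2 > 0" "\<forall>h. 0 < h \<and> h < \<delta>2 \<longrightarrow> W z - W (z - h) \<le> (sp z + 2 * e4) * h"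
              by blast
            show "\<exists>\<delta>>0. \<forall>h. 0 < h \<and> h < \<delta> \<longrightarrow> G (z - h) \<le> G z + \<epsilon> * h"
            proof (intro exI[of _ "min \<delta>1 \<delta>2"] conjI allI impI)
              show "min \<delta>1 \<delta>2 > 0" using d1 d2 by simp
              fix h assume h: "0 < h \<and> h < min \<delta>1 \<delta>2"
              then have b: "w z - w (z - h) \<ge> (sp z - 2 * e4) * h" "W z - W (z - h) \<le> (sp z + 2 * e4) * h"
                using d1 d2 by auto
              have eq: "(sp z + 2 * e4) * h - (sp z - 2 * e4) * h = \<epsilon> * h" using e4(2) by (simp add: algebra_simps)
              show "G (z - h) \<le> G z + \<epsilon> * h" unfolding G_def using b eq by linarith
            qed
          qed
        qed
      qed
      show ?thesis
      proof
        fix s :: real assume s: "s \<in> {0..1}"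
        have "G s \<le> G 0" "G 0 \<le> G s" using Gmono[of 0 s] Gmono2[of 0 s] s by auto
        then have "G s = G 0" by simp
        then show "w s = w 0 + integral {0..s} (sigma_plus H a)" unfolding G_def W_def sp_def
          using W0 unfolding W_def sp_def by simp
      qed
    next
      assume nd: "\<forall>s\<in>{0..1}. minH H s < a"
      show ?thesis
      proof (rule ccontr)
        assume "\<not> ?thesis"
        then obtain s where s: "s \<in> {0..1}" "w s \<noteq> w 0 + integral {0..s} (sigma_plus H a)" by blast
        have Ws: "W s = integral {0..s} (sigma_plus H a)" unfolding W_def sp_def ..
        have "G s \<noteq> G 0" unfolding G_def using W0 Ws s(2) by linarith
        moreover have "G s \<le> G 0" using Gmono[of 0 s] s(1) by simp
        ultimately have Gs: "G s < G 0" by linarith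
        have "\<not> (\<forall>x\<in>{0<..<1}. - G x \<le> - G 0)"
        proof
          assume all: "\<forall>x\<in>{0<..<1}. - G x \<le> - G 0"
          have cG: "continuous_on {0..1} (\<lambda>x. - G x)" using Gc by (rule continuous_on_minus)
          have "\<forall>x\<in>{0..1}. - G x \<le> - G 0" by (rule cont_le_closed[OF _ cG all]) simp
          then have "- G s \<le> - G 0" using s(1) by blast
          then show False using Gs by linarith
        qed
        then obtain t0 where t0: "t0 \<in> {0<..<1}" "G t0 < G 0" by (auto simp: not_le)
        define sm where "sm = (\<lambda>s. Inf {p. H s p = a})"
        have smc: "continuous_on {0..1} sm" using sigma_minus_cont_nondeg[OF g nd] unfolding sm_def .
        have gap: "sm x < sp x \<and> (\<forall>p. sm x < p \<and> p < sp x \<longrightarrow> H x p < a)" if "x \<in> {0..1}" for x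
          using pwH(5)[OF g that mle[rule_format, OF that]] nd that unfolding sm_def sp_def by blast
        have dc: "continuous_on {0..1} (\<lambda>s. sp s - sm s)" using spc smc by (intro continuous_intros)
        obtain s1 where s1: "s1 \<in> {0..1}" "\<forall>y\<in>{0..1}. sp s1 - sm s1 \<le> sp y - sm y"
          using continuous_attains_inf[OF _ _ dc] by auto
        define \<eta> where "\<eta> = sp s1 - sm s1"
        have eta: "\<eta> > 0" using gap[OF s1(1)] unfolding \<eta>_def by simp
        have etale: "\<forall>y\<in>{0..1}. \<eta> \<le> sp y - sm y" using s1(2) unfolding \<eta>_def .
        define e2 where "e2 = min (\<eta>/4) ((G 0 - G t0)/4)"
        have e2: "e2 > 0" "2 * e2 < \<eta>" "2 * e2 < G 0 - G t0" using eta t0(2) unfolding e2_def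
          by (auto simp: min_def field_simps)
        define \<epsilon> where "\<epsilon> = 2 * e2"
        have e: "\<epsilon> > 0" "\<epsilon> < \<eta>" "\<epsilon> < G 0 - G t0" using e2 unfolding \<epsilon>_def by auto
        define phi where "phi = (\<lambda>x. W x - \<epsilon> * x)"
        define dphi where "dphi = (\<lambda>x. sp x - \<epsilon>)"
        have C1: "C1_open phi dphi" unfolding C1_open_def
        proof (intro conjI ballI)
          fix x :: real assume x: "x \<in> {0<..<1}"
          show "(phi has_real_derivative dphi x) (at x)" unfolding phi_def dphi_def
            using WDi[OF x] by (auto intro!: derivative_eq_intros)
        next
          show "continuous_on {0<..<1} dphi"
          proof -
            have "continuous_on {0<..<1} sp" by (rule continuous_on_subset[OF spc]) auto
            then have "continuous_on {0<..<1} (\<lambda>x. sp x - \<epsilon>)" by (intro continuous_intros)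
            then show ?thesis unfolding dphi_def .
          qed
        qed
        have bad: "H x (dphi x) < a" if "x \<in> {0<..<1}" for x
        proof -
          have x: "x \<in> {0..1}" using that by auto
          have "\<eta> \<le> sp x - sm x" using etale x by blast
          then have "sm x < dphi x" "dphi x < sp x" using e unfolding dphi_def by linarith+
          then show ?thesis using gap[OF x] by blast
        qed
        have key: "G y + \<epsilon> * y \<le> G x + \<epsilon> * x" if xy: "t0 \<le> x" "x < y" "y < 1" for x y
        proof (rule ccontr)
          assume c: "\<not> G y + \<epsilon> * y \<le> G x + \<epsilon> * x"
          show False
          proof (rule core_min[OF sup w_cont C1, where al=0 and z=x and be=y])
            have "continuous_on {0..y} W" by (rule continuous_on_subset[OF Wc]) (use xy in auto)
            then show "continuous_on {0..y} phi" unfolding phi_def by (intro continuous_intros)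
            show "0 \<le> (0::real)" "0 < x" "x < y" "y \<le> 1" using xy t0 by auto
            have "G x \<le> G t0" using Gmono[of t0 x] xy t0 by auto
            moreover have "\<epsilon> * x \<le> \<epsilon>" using xy e t0 by (simp add: mult_le_cancel_left1)
            ultimately have "G x + \<epsilon> * x < G 0" using e by linarith
            then show "w x - phi x < w 0 - phi 0" unfolding phi_def G_def using W0 by simp
            show "w x - phi x < w y - phi y" using c unfolding phi_def G_def by simp
            show "\<forall>x\<in>{0<..<y}. H x (dphi x) < a" using bad xy by auto
          qed
        qed
        have key1: "G 1 + \<epsilon> \<le> G x + \<epsilon> * x" if x: "t0 \<le> x" "x < 1" for x
        proof -
          have "\<forall>y\<in>{x..1}. G y + \<epsilon> * y \<le> G x + \<epsilon> * x"
          proof (rule cont_le_closed[OF x(2)])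
            have "continuous_on {x..1} G" by (rule continuous_on_subset[OF Gc]) (use x t0 in auto)
            then show "continuous_on {x..1} (\<lambda>y. G y + \<epsilon> * y)" by (intro continuous_intros)
            show "\<forall>y\<in>{x<..<1}. G y + \<epsilon> * y \<le> G x + \<epsilon> * x" using key x by auto
          qed
          moreover have "(1::real) \<in> {x..1}" using x by simp
          ultimately have "G 1 + \<epsilon> * 1 \<le> G x + \<epsilon> * x" by blast
          then show ?thesis by simp
        qed
        define p where "p = sp 1 - e2"
        define L where "L = sp 1 + e2"
        have 1: "(1::real) \<in> {0..1}" by simp
        have der: "((\<lambda>x. W x - L * x) has_real_derivative sp 1 - L) (at 1 within {0..1})"
          by (rule derivative_eq_intros WD[OF 1] refl | simp)+
        have neg: "sp 1 - L < 0" unfolding L_def using e2 by simp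
        obtain d where dd: "d > 0" "\<forall>h>0. 1 - h \<in> {0..1} \<longrightarrow> h < d \<longrightarrow> W 1 - L * 1 < W (1 - h) - L * (1 - h)"
          using has_real_derivative_neg_dec_left[OF der neg] by blast
        have "H 1 p \<ge> a"
        proof (rule P1[rule_format, of "\<lambda>x. w 1 + p * (x - 1)" "\<lambda>x. p"], intro conjI)
          show "C1_closed (\<lambda>x. w 1 + p * (x - 1)) (\<lambda>x. p)" unfolding C1_closed_def
          proof (intro conjI ballI)
            fix x :: real
            show "((\<lambda>x. w 1 + p * (x - 1)) has_real_derivative p) (at x within {0..1})"
              by (rule derivative_eq_intros refl | simp)+
          qed (rule continuous_on_const)
          show "w 1 + p * (1 - 1) = w 1" by simp
          show "\<exists>\<delta>>0. \<forall>s\<in>{1 - \<delta><..<1}. w 1 + p * (s - 1) \<le> w s"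
          proof (intro exI[of _ "min d (1 - t0)"] conjI ballI)
            show "min d (1 - t0) > 0" using dd(1) t0 by simp
            fix s assume s: "s \<in> {1 - min d (1 - t0)<..<1}"
            define h where "h = 1 - s"
            have h: "h > 0" "1 - h \<in> {0..1}" "h < d" "t0 \<le> s" "s < 1" using s t0 unfolding h_def by auto
            have hs: "1 - h = s" unfolding h_def by simp
            have "W 1 - L * 1 < W (1 - h) - L * (1 - h)" using dd(2) h(1,2,3) by blast
            then have f1: "W 1 - L * 1 < W s - L * s" unfolding hs .
            have f2: "G 1 + \<epsilon> \<le> G s + \<epsilon> * s" using key1[OF h(4,5)] .
            have eq: "L * s - L + \<epsilon> - \<epsilon> * s = p * (s - 1)" unfolding L_def p_def \<epsilon>_def
              by (simp add: algebra_simps)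
            show "w 1 + p * (s - 1) \<le> w s" using f1 f2 eq unfolding G_def by linarith
          qed
        qed
        moreover have "H 1 p < a"
        proof -
          have "\<eta> \<le> sp 1 - sm 1" using etale 1 by blast
          then have "sm 1 < p" "p < sp 1" using e2 unfolding p_def by linarith+
          then show ?thesis using gap[OF 1] by blast
        qed
        ultimately show False by simp
      qed
    qed
  next
    assume E: "\<forall>s\<in>{0..1}. w s = w 0 + integral {0..s} (sigma_plus H a)"
    show "\<forall>phi dphi. C1_closed phi dphi \<and> phi 1 = w 1 \<and>
             (\<exists>\<delta>>0. \<forall>s\<in>{1-\<delta><..<1}. w s \<ge> phi s) \<longrightarrow> H 1 (dphi 1) \<ge> a"
    proof (intro allI impI)
      fix phi dphi assume A: "C1_closed phi dphi \<and> phi 1 = w 1 \<and> (\<exists>\<delta>>0. \<forall>s\<in>{1-\<delta><..<1}. w s \<ge> phi s)"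
      then obtain \<delta> where d: "\<delta> > 0" "\<forall>s\<in>{1-\<delta><..<1}. w s \<ge> phi s" by blast
      have "C1_closed phi dphi" using A by blast
      then have "\<forall>x\<in>{0..1}. (phi has_real_derivative dphi x) (at x within {0..1})"
        unfolding C1_closed_def by blast
      then have pd: "(phi has_real_derivative dphi 1) (at 1 within {0..1})" by simp
      show "H 1 (dphi 1) \<ge> a"
      proof (rule ccontr)
        assume "\<not> ?thesis"
        then have Hlt: "H 1 (dphi 1) < a" by simp
        have 1: "(1::real) \<in> {0..1}" by simp
        have le1: "dphi 1 \<le> sp 1" using pwH(2)[OF g 1 mle[rule_format, OF 1]] Hlt unfolding sp_def by simp
        have ne: "dphi 1 \<noteq> sp 1" using pwH(1)[OF g 1 mle[rule_format, OF 1]] Hlt unfolding sp_def by auto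
        have der: "((\<lambda>x. W x - phi x) has_real_derivative sp 1 - dphi 1) (at 1 within {0..1})"
          by (rule DERIV_diff[OF WD[OF 1] pd])
        have pos: "sp 1 - dphi 1 > 0" using le1 ne by simp
        obtain d where dd: "d > 0" "\<forall>h>0. 1 - h \<in> {0..1} \<longrightarrow> h < d \<longrightarrow> W (1 - h) - phi (1 - h) < W 1 - phi 1"
          using has_real_derivative_pos_inc_left[OF der pos] by blast
        define h where "h = min (min d \<delta>) 1 / 2"
        have hm: "min (min d \<delta>) 1 > 0" "min (min d \<delta>) 1 \<le> d" "min (min d \<delta>) 1 \<le> \<delta>"
          "min (min d \<delta>) 1 \<le> 1" using dd(1) d(1) by auto
        have h: "h > 0" "h < d" "h < \<delta>" "1 - h \<in> {0..1}" using hm unfolding h_def by auto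
        have f1: "W (1 - h) - phi (1 - h) < W 1 - phi 1" using dd(2) h(1,2,4) by blast
        have "1 - h \<in> {1-\<delta><..<1}" using h by simp
        then have f2: "w (1 - h) \<ge> phi (1 - h)" using d(2) by blast
        have f3: "w (1 - h) = w 0 + W (1 - h)" "w 1 = w 0 + W 1"
          using E h(4) 1 unfolding W_def sp_def by blast+
        have f4: "phi 1 = w 1" using A by simp
        show False using f1 f2 f3 f4 by linarith
      qed
    qed
  qed
qed


end
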